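(* Let $G$ be a connected graph with $n\geq 2$ vertices and $m$ edges, and let $S(G)$ be its subdivision. Then $$R^+(S(G))=4R^+(G)+4R^*(G)+(m+n)(m-n+1)+2m(m-n).$$
   Context: All graphs are finite, undirected, without loops or multiple edges. For a connected graph $H$ and vertices $i,j$, the resistance distance $\Omega_{ij}$ is the effective resistance between $i$ and $j$ in the electrical network obtained from $H$ by replacing each edge by a unit resistor. With $d_i$ the degree of vertex $i$ in $H$ and sums over unordered pairs of distinct vertices of $H$: the Kirchhoff index is $R(H)=\sum_{\{i,j\}\subseteq V(H)}\Omega_{ij}$, the additive degree-Kirchhoff index is $R^+(H)=\sum_{\{i,j\}\subseteq V(H)}(d_i+d_j)\Omega_{ij}$, and the multiplicative degree-Kirchhoff index is $R^*(H)=\sum_{\{i,j\}\subseteq V(H)}d_id_j\Omega_{ij}$ (all computed in $H$ itself, with degrees and resistances of $H$). The subdivision $S(G)$ is the graph obtained from $G$ by replacing every edge with a path of length two (i.e., inserting one new vertex of degree 2 on each edge). *)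

theory Defs
  imports Complex_Main
begin

definition simple_graph :: "'a set \<Rightarrow> ('a \<Rightarrow> 'a \<Rightarrow> bool) \<Rightarrow> bool" where
  "simple_graph V E \<longleftrightarrow> finite V \<and> (\<forall>x y. E x y \<longrightarrow> x \<in> V \<and> y \<in> V)
     \<and> (\<forall>x y. E x y \<longrightarrow> E y x) \<and> (\<forall>x. \<not> E x x)"

definition connected_graph :: "'a set \<Rightarrow> ('a \<Rightarrow> 'a \<Rightarrow> bool) \<Rightarrow> bool" where
  "connected_graph V E \<longleftrightarrow> (\<forall>x\<in>V. \<forall>y\<in>V. E\<^sup>*\<^sup>* x y)"

definition edges :: "'a set \<Rightarrow> ('a \<Rightarrow> 'a \<Rightarrow> bool) \<Rightarrow> 'a set set" where
  "edges V E = {{a, b} | a b. a \<in> V \<and> b \<in> V \<and> E a b}"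

definition degree :: "'a set \<Rightarrow> ('a \<Rightarrow> 'a \<Rightarrow> bool) \<Rightarrow> 'a \<Rightarrow> real" where
  "degree V E k = real (card {l\<in>V. E k l})"

text \<open>Effective resistance between i and j with unit resistors on the edges:
  the voltage difference v i - v j, where v is a potential realising a unit
  current injected at i and extracted at j (Kirchhoff's current law at every
  vertex, Ohm's law with unit resistances).\<close>
definition resistance :: "'a set \<Rightarrow> ('a \<Rightarrow> 'a \<Rightarrow> bool) \<Rightarrow> 'a \<Rightarrow> 'a \<Rightarrow> real" where
  "resistance V E i j = (THE r. \<exists>v :: 'a \<Rightarrow> real.
      (\<forall>k\<in>V. (\<Sum>l\<in>{l\<in>V. E k l}. v k - v l)
               = (if k = i then 1 else 0) - (if k = j then 1 else 0))
      \<and> r = v i - v j)"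

text \<open>Sums over unordered pairs {i,j} of distinct vertices, written as half of
  the sum over ordered pairs (all summands are symmetric in i, j).\<close>
definition kirchhoff :: "'a set \<Rightarrow> ('a \<Rightarrow> 'a \<Rightarrow> bool) \<Rightarrow> real" where
  "kirchhoff V E = (\<Sum>i\<in>V. \<Sum>j\<in>V - {i}. resistance V E i j) / 2"

definition add_deg_kirchhoff :: "'a set \<Rightarrow> ('a \<Rightarrow> 'a \<Rightarrow> bool) \<Rightarrow> real" where
  "add_deg_kirchhoff V E = (\<Sum>i\<in>V. \<Sum>j\<in>V - {i}.
      (degree V E i + degree V E j) * resistance V E i j) / 2"

definition mul_deg_kirchhoff :: "'a set \<Rightarrow> ('a \<Rightarrow> 'a \<Rightarrow> bool) \<Rightarrow> real" where
  "mul_deg_kirchhoff V E = (\<Sum>i\<in>V. \<Sum>j\<in>V - {i}.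
      degree V E i * degree V E j * resistance V E i j) / 2"

definition subdiv_vertices :: "'a set \<Rightarrow> ('a \<Rightarrow> 'a \<Rightarrow> bool) \<Rightarrow> ('a + 'a set) set" where
  "subdiv_vertices V E = Inl ` V \<union> Inr ` edges V E"

fun subdiv_adj_aux :: "'a set set \<Rightarrow> ('a + 'a set) \<Rightarrow> ('a + 'a set) \<Rightarrow> bool" where
  "subdiv_adj_aux Es (Inl a) (Inr e) = (e \<in> Es \<and> a \<in> e)"
| "subdiv_adj_aux Es (Inr e) (Inl a) = (e \<in> Es \<and> a \<in> e)"
| "subdiv_adj_aux Es _ _ = False"

definition subdiv_adj :: "'a set \<Rightarrow> ('a \<Rightarrow> 'a \<Rightarrow> bool) \<Rightarrow> ('a + 'a set) \<Rightarrow> ('a + 'a set) \<Rightarrow> bool" where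
  "subdiv_adj V E = subdiv_adj_aux (edges V E)"

end

theory Submission
  imports Defs "Jordan_Normal_Form.Determinant"
begin

locale cgraph =
  fixes V :: "'a set" and E :: "'a \<Rightarrow> 'a \<Rightarrow> bool"
  assumes sg: "simple_graph V E" and cg: "connected_graph V E"
begin

definition nb where "nb k = {l\<in>V. E k l}"
definition Lap :: "('a \<Rightarrow> real) \<Rightarrow> 'a \<Rightarrow> real" where
  "Lap u k = (\<Sum>l\<in>nb k. u k - u l)"

lemma finV: "finite V" using sg by (simp add: simple_graph_def)
lemma fin_nb: "finite (nb k)" using finV by (simp add: nb_def)
lemma E_V: "E x y \<Longrightarrow> x \<in> V \<and> y \<in> V" using sg by (simp add: simple_graph_def)
lemma E_sym: "E x y \<Longrightarrow> E y x" using sg by (simp add: simple_graph_def)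
lemma E_irr: "\<not> E x x" using sg by (simp add: simple_graph_def)
lemma conn: "x \<in> V \<Longrightarrow> y \<in> V \<Longrightarrow> E\<^sup>*\<^sup>* x y" using cg by (simp add: connected_graph_def)

lemma sum_swapE: "(\<Sum>k\<in>V. \<Sum>l\<in>nb k. f k l) = (\<Sum>k\<in>V. \<Sum>l\<in>nb k. f l k)"
proof -
  have "(\<Sum>k\<in>V. \<Sum>l\<in>nb k. f k l) = (\<Sum>k\<in>V. \<Sum>l\<in>{l\<in>V. E k l}. f k l)" by (simp add: nb_def)
  also have "\<dots> = (\<Sum>l\<in>V. \<Sum>k\<in>{k\<in>V. E k l}. f k l)" by (rule sum.swap_restrict[OF finV finV])
  also have "\<dots> = (\<Sum>l\<in>V. \<Sum>k\<in>nb l. f k l)"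
  proof (intro sum.cong refl)
    fix l assume "l \<in> V"
    show "{k \<in> V. E k l} = nb l" unfolding nb_def using E_sym by blast
  qed
  finally show ?thesis .
qed

lemma sum_Lap: "(\<Sum>k\<in>V. Lap u k) = 0"
proof -
  have "(\<Sum>k\<in>V. Lap u k) = (\<Sum>k\<in>V. \<Sum>l\<in>nb k. u k - u l)" by (simp add: Lap_def)
  also have "\<dots> = (\<Sum>k\<in>V. \<Sum>l\<in>nb k. u l - u k)" by (rule sum_swapE)
  also have "\<dots> = (\<Sum>k\<in>V. \<Sum>l\<in>nb k. - (u k - u l))" by simp
  also have "\<dots> = - (\<Sum>k\<in>V. \<Sum>l\<in>nb k. u k - u l)"
    by (simp only: sum_negf)
  finally show ?thesis by (simp add: Lap_def)
qed

lemma max_const: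
  assumes h: "\<And>k. k \<in> V \<Longrightarrow> Lap u k = 0" and x: "x \<in> V" and y: "y \<in> V"
  shows "u x = u y"
proof -
  have fin: "finite (u ` V)" using finV by simp
  have ne: "u ` V \<noteq> {}" using x by auto
  define M where "M = Max (u ` V)"
  have "M \<in> u ` V" unfolding M_def by (rule Max_in[OF fin ne])
  then obtain k0 where k0: "k0 \<in> V" "u k0 = M" by (metis imageE)
  have le: "u z \<le> M" if "z \<in> V" for z
    unfolding M_def by (rule Max_ge[OF fin]) (use that in simp)
  have all: "u z = M" if "E\<^sup>*\<^sup>* k0 z" for z
    using that
  proof (induction rule: rtranclp_induct)
    case base then show ?case using k0 by simp
  next
    case (step y z)
    have yV: "y \<in> V" using step.hyps(2) E_V by blast
    have "Lap u y = 0" using h yV by simp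
    hence s0: "(\<Sum>l\<in>nb y. u y - u l) = 0" by (simp add: Lap_def)
    have nn: "\<forall>l\<in>nb y. 0 \<le> u y - u l"
    proof
      fix l assume "l \<in> nb y"
      hence "l \<in> V" by (simp add: nb_def)
      hence "u l \<le> M" by (rule le)
      thus "0 \<le> u y - u l" using step.IH by simp
    qed
    have zn: "z \<in> nb y" using step.hyps(2) E_V by (simp add: nb_def)
    have "u y - u z = 0" using sum_nonneg_eq_0_iff[of "nb y" "\<lambda>l. u y - u l"] fin_nb nn s0 zn by blast
    thus ?case using step.IH by simp
  qed
  have "u x = M" by (rule all[OF conn[OF k0(1) x]])
  moreover have "u y = M" by (rule all[OF conn[OF k0(1) y]])
  ultimately show ?thesis by simp
qed

lemma Lap_diff: "Lap (\<lambda>x. u x - v x) k = Lap u k - Lap v k"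
  by (simp add: Lap_def sum_subtractf[symmetric] algebra_simps)

lemma res_eq:
  assumes i: "i \<in> V" and j: "j \<in> V"
    and h: "\<And>k. k \<in> V \<Longrightarrow> Lap u k = (if k = i then 1 else 0) - (if k = j then 1 else 0)"
  shows "resistance V E i j = u i - u j"
  unfolding resistance_def
proof (rule the_equality)
  show "\<exists>v. (\<forall>k\<in>V. (\<Sum>l\<in>{l \<in> V. E k l}. v k - v l) = (if k = i then 1 else 0) - (if k = j then 1 else 0)) \<and>
        u i - u j = v i - v j"
  proof (intro exI conjI)
    show "\<forall>k\<in>V. (\<Sum>l\<in>{l \<in> V. E k l}. u k - u l) = (if k = i then 1 else 0) - (if k = j then 1 else 0)"
      using h by (simp add: Lap_def nb_def)
  qed simp
next
  fix r :: real assume "\<exists>v. (\<forall>k\<in>V. (\<Sum>l\<in>{l \<in> V. E k l}. v k - v l) = (if k = i then 1 else 0) - (if k = j then 1 else 0)) \<and>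
        r = v i - v j"
  then obtain v where v: "\<And>k. k \<in> V \<Longrightarrow> Lap v k = (if k = i then 1 else 0) - (if k = j then 1 else 0)"
    and r: "r = v i - v j" by (auto simp: Lap_def nb_def)
  have "(\<lambda>x. v x - u x) i = (\<lambda>x. v x - u x) j"
    by (rule max_const[OF _ i j]) (simp add: Lap_diff v h)
  then show "r = u i - u j" using r by simp
qed

definition Lp :: "'a \<Rightarrow> 'a \<Rightarrow> real" where
  "Lp k l = (if k = l then real (card (nb k)) else 0) - (if E k l then 1 else 0)"

lemma Lap_expand:
  assumes k: "k \<in> V"
  shows "Lap u k = (\<Sum>y\<in>V. Lp k y * u y)"
proof -
  have "(\<Sum>y\<in>V. Lp k y * u y) = (\<Sum>y\<in>V. (if k = y then real (card (nb k)) * u y else 0))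
        - (\<Sum>y\<in>V. (if E k y then u y else 0))"
    unfolding sum_subtractf[symmetric]
    by (rule sum.cong) (auto simp: Lp_def E_irr)
  also have "(\<Sum>y\<in>V. (if k = y then real (card (nb k)) * u y else 0)) = real (card (nb k)) * u k"
    using k finV by simp
  also have "(\<Sum>y\<in>V. (if E k y then u y else 0)) = (\<Sum>y\<in>nb k. u y)"
    unfolding nb_def by (rule sum.inter_filter[OF finV, symmetric])
  finally show ?thesis
    by (simp add: Lap_def sum_subtractf)
qed

lemma exists_sol:
  assumes r: "r \<in> V" and sb: "(\<Sum>k\<in>V. \<beta> k) = 0"
  shows "\<exists>u. \<forall>k\<in>V. Lap u k = \<beta> k"
proof -
  obtain xs where xs: "distinct xs" "set xs = V - {r}"
    using finite_distinct_list[of "V - {r}"] finV by auto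
  define N where "N = length xs"
  define A :: "real mat" where "A = mat N N (\<lambda>(i,j). Lp (xs!i) (xs!j))"
  define ix where "ix y = (THE i. i < N \<and> xs!i = y)" for y
  have ix: "ix (xs!j) = j" if "j < N" for j
    unfolding ix_def
    by (rule the_equality) (use that xs(1) in \<open>auto simp: N_def nth_eq_iff_index_eq\<close>)
  define wv where "wv x = (\<lambda>y. if y \<in> set xs then x $ ix y else 0)" for x :: "real vec"
  have wv_nth: "wv x (xs!j) = x $ j" if "j < N" for x j
    using that ix by (simp add: wv_def N_def)
  have wv_r: "wv x r = 0" for x using xs by (simp add: wv_def)
  have sumV: "(\<Sum>y\<in>V. f y * wv x y) = (\<Sum>j\<in>{0..<N}. f (xs!j) * x $ j)" for f x
  proof -
    have "(\<Sum>y\<in>V. f y * wv x y) = f r * wv x r + (\<Sum>y\<in>V - {r}. f y * wv x y)"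
      by (rule sum.remove[OF finV r])
    also have "\<dots> = (\<Sum>y\<in>V - {r}. f y * wv x y)"
      using wv_r by simp
    also have "\<dots> = (\<Sum>y\<in>nth xs ` {0..<N}. f y * wv x y)"
    proof -
      have "nth xs ` {0..<N} = set xs" by (auto simp: N_def in_set_conv_nth)
      thus ?thesis using xs by simp
    qed
    also have "\<dots> = (\<Sum>j\<in>{0..<N}. f (xs!j) * wv x (xs!j))"
    proof -
      have "inj_on (nth xs) {0..<N}" by (rule inj_on_nth) (use xs(1) in \<open>auto simp: N_def\<close>)
      thus ?thesis using sum.reindex[of "nth xs" "{0..<N}" "\<lambda>y. f y * wv x y"] by (simp add: comp_def)
    qed
    also have "\<dots> = (\<Sum>j\<in>{0..<N}. f (xs!j) * x $ j)"
      by (rule sum.cong) (auto simp: wv_nth)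
    finally show ?thesis .
  qed
  have Acar: "A \<in> carrier_mat N N" by (simp add: A_def)
  have Av: "(A *\<^sub>v x) $ i = Lap (wv x) (xs!i)" if "i < N" "x \<in> carrier_vec N" for x i
  proof -
    have xi: "xs!i \<in> V" using that xs by (metis DiffD1 N_def nth_mem)
    have "(A *\<^sub>v x) $ i = (\<Sum>j\<in>{0..<N}. Lp (xs!i) (xs!j) * x $ j)"
      using that by (simp add: A_def scalar_prod_def)
    also have "\<dots> = Lap (wv x) (xs!i)"
      by (simp add: Lap_expand[OF xi] sumV)
    finally show ?thesis .
  qed
  have inj: "x = 0\<^sub>v N" if x: "x \<in> carrier_vec N" and Ax: "A *\<^sub>v x = 0\<^sub>v N" for x
  proof -
    have h1: "\<forall>k\<in>V - {r}. Lap (wv x) k = 0"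
    proof
      fix k assume "k \<in> V - {r}"
      then obtain i where i: "i < N" "k = xs!i" using xs by (metis N_def in_set_conv_nth)
      have "(A *\<^sub>v x) $ i = 0" using Ax i by simp
      thus "Lap (wv x) k = 0" using Av[OF i(1) x] i by simp
    qed
    have h2: "Lap (wv x) r = 0"
    proof -
      have "Lap (wv x) r + (\<Sum>k\<in>V - {r}. Lap (wv x) k) = 0"
        using sum_Lap[of "wv x"] sum.remove[OF finV r, of "Lap (wv x)"] by simp
      thus ?thesis using h1 by simp
    qed
    have h3: "wv x k = 0" if "k \<in> V" for k
    proof -
      have "wv x k = wv x r"
        by (rule max_const[OF _ that r]) (use h1 h2 in blast)
      thus ?thesis using wv_r by simp
    qed
    show ?thesis
    proof (rule eq_vecI)
      fix j assume "j < dim_vec (0\<^sub>v N)"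
      hence j: "j < N" by simp
      have "xs!j \<in> V" using j xs by (metis DiffD1 N_def nth_mem)
      hence "x $ j = 0" using h3[of "xs!j"] wv_nth[OF j, of x] by simp
      thus "x $ j = 0\<^sub>v N $ j" using j by simp
    qed (use x in simp)
  qed
  have "det A \<noteq> 0"
    using det_0_iff_vec_prod_zero_field[OF Acar] inj by blast
  from det_non_zero_imp_unit[OF Acar this, of "()"]
  obtain B where B: "B \<in> carrier_mat N N" and AB: "A * B = 1\<^sub>m N"
    unfolding Units_def ring_mat_def by auto
  define bv where "bv = vec N (\<lambda>i. \<beta> (xs!i))"
  define x where "x = B *\<^sub>v bv"
  have xc: "x \<in> carrier_vec N" using B by (simp add: x_def bv_def)
  have Ax: "A *\<^sub>v x = bv"
    using B Acar by (simp add: x_def bv_def assoc_mult_mat_vec[symmetric, of A N N B N] AB)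
  have h1: "\<forall>k\<in>V - {r}. Lap (wv x) k = \<beta> k"
  proof
    fix k assume "k \<in> V - {r}"
    then obtain i where i: "i < N" "k = xs!i" using xs by (metis N_def in_set_conv_nth)
    have "(A *\<^sub>v x) $ i = \<beta> k" using Ax i by (simp add: bv_def)
    thus "Lap (wv x) k = \<beta> k" using Av[OF i(1) xc] i by simp
  qed
  have "Lap (wv x) r = \<beta> r"
  proof -
    have "Lap (wv x) r + (\<Sum>k\<in>V - {r}. Lap (wv x) k) = 0"
      using sum_Lap[of "wv x"] sum.remove[OF finV r, of "Lap (wv x)"] by simp
    moreover have "\<beta> r + (\<Sum>k\<in>V - {r}. \<beta> k) = 0"
      using sb sum.remove[OF finV r, of \<beta>] by simp
    moreover have "(\<Sum>k\<in>V - {r}. Lap (wv x) k) = (\<Sum>k\<in>V - {r}. \<beta> k)"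
      using h1 by simp
    ultimately show ?thesis by simp
  qed
  with h1 show ?thesis by blast
qed

end

context cgraph
begin

lemma Lap_add: "Lap (\<lambda>x. u x + w x) k = Lap u k + Lap w k"
  by (simp add: Lap_def sum.distrib[symmetric] algebra_simps)

lemma Lap_scale: "Lap (\<lambda>x. c * u x) k = c * Lap u k"
  by (simp add: Lap_def sum_distrib_left algebra_simps)

lemma Lap_const: "Lap (\<lambda>x. c) k = 0"
  by (simp add: Lap_def)

lemma res_refl: "i \<in> V \<Longrightarrow> resistance V E i i = 0"
  using res_eq[of i i "\<lambda>_. 0"] by (simp add: Lap_def)

lemma res_sym:
  assumes i: "i \<in> V" and j: "j \<in> V"
  shows "resistance V E i j = resistance V E j i"
proof -
  have "(\<Sum>k\<in>V. (if k = i then 1 else 0) - (if k = j then (1::real) else 0)) = 0"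
    using i j finV by (simp add: sum_subtractf)
  then obtain u where u: "\<forall>k\<in>V. Lap u k = (if k = i then 1 else 0) - (if k = j then 1 else 0)"
    using exists_sol[OF i] by blast
  have "resistance V E i j = u i - u j" using res_eq[OF i j] u by simp
  moreover have "resistance V E j i = (\<lambda>x. - u x) j - (\<lambda>x. - u x) i"
    by (rule res_eq[OF j i]) (use u Lap_scale[of "-1" u] in auto)
  ultimately show ?thesis by simp
qed

lemma edges_sub: "edges V E \<subseteq> Pow V"
  unfolding edges_def by auto

lemma fin_Ed: "finite (edges V E)"
  using edges_sub finV by (meson finite_Pow_iff finite_subset)

lemma edge_cases:
  assumes "f \<in> edges V E"
  obtains p q where "f = {p,q}" "E p q" "p \<in> V" "q \<in> V" "p \<noteq> q"
  using assms E_irr unfolding edges_def by blast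

lemma edge_subV: "f \<in> edges V E \<Longrightarrow> f \<subseteq> V"
  using edges_sub by auto

lemma edge_card: "f \<in> edges V E \<Longrightarrow> card f = 2"
  by (erule edge_cases) auto

lemma edge_fin: "f \<in> edges V E \<Longrightarrow> finite f"
  by (erule edge_cases) auto

lemma edge_mem: "E a l \<Longrightarrow> {a,l} \<in> edges V E"
  unfolding edges_def using E_V by blast

lemma inc_eq: 
  assumes a: "a \<in> V"
  shows "{e \<in> edges V E. a \<in> e} = (\<lambda>l. {a,l}) ` nb a"
proof
  show "{e \<in> edges V E. a \<in> e} \<subseteq> (\<lambda>l. {a,l}) ` nb a"
  proof
    fix e assume "e \<in> {e \<in> edges V E. a \<in> e}"
    hence e: "e \<in> edges V E" "a \<in> e" by auto
    from e(1) obtain p q where pq: "e = {p,q}" "E p q" "p \<in> V" "q \<in> V" "p \<noteq> q" by (rule edge_cases)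
    show "e \<in> (\<lambda>l. {a,l}) ` nb a"
    proof (cases "a = p")
      case True
      hence "q \<in> nb a" using pq by (simp add: nb_def)
      thus ?thesis using pq True by blast
    next
      case False
      hence "a = q" using e(2) pq by auto
      moreover have "E q p" using pq E_sym by blast
      ultimately have "p \<in> nb a" using pq by (simp add: nb_def)
      thus ?thesis using pq \<open>a = q\<close> by blast
    qed
  qed
next
  show "(\<lambda>l. {a,l}) ` nb a \<subseteq> {e \<in> edges V E. a \<in> e}"
    using edge_mem by (auto simp: nb_def)
qed

lemma inc_inj: "inj_on (\<lambda>l. {a,l}) (nb a)"
proof (rule inj_onI)
  fix x y assume "x \<in> nb a" "y \<in> nb a" "{a,x} = {a,y}"
  moreover have "x \<noteq> a" "y \<noteq> a" using \<open>x \<in> nb a\<close> \<open>y \<in> nb a\<close> E_irr by (auto simp: nb_def)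
  ultimately show "x = y" by (metis doubleton_eq_iff)
qed

lemma inc_reindex:
  assumes a: "a \<in> V"
  shows "(\<Sum>e\<in>{e \<in> edges V E. a \<in> e}. h e) = (\<Sum>l\<in>nb a. h {a,l})"
  unfolding inc_eq[OF a] using sum.reindex[OF inc_inj, of h a] by (simp add: comp_def)

lemma inc_card:
  assumes a: "a \<in> V"
  shows "card {e \<in> edges V E. a \<in> e} = card (nb a)"
  unfolding inc_eq[OF a] by (rule card_image[OF inc_inj])

lemma edge_sum:
  "(\<Sum>f\<in>edges V E. \<Sum>s\<in>f. k s f) = (\<Sum>s\<in>V. \<Sum>l\<in>nb s. k s {s,l})"
proof -
  have "(\<Sum>f\<in>edges V E. \<Sum>s\<in>f. k s f) = (\<Sum>f\<in>edges V E. \<Sum>s\<in>{s\<in>V. s \<in> f}. k s f)"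
  proof (rule sum.cong[OF refl])
    fix f assume "f \<in> edges V E"
    hence "{s\<in>V. s \<in> f} = f" using edge_subV by blast
    thus "(\<Sum>s\<in>f. k s f) = (\<Sum>s\<in>{s\<in>V. s \<in> f}. k s f)" by simp
  qed
  also have "\<dots> = (\<Sum>s\<in>V. \<Sum>f\<in>{f\<in>edges V E. s \<in> f}. k s f)"
    by (rule sum.swap_restrict[OF fin_Ed finV])
  also have "\<dots> = (\<Sum>s\<in>V. \<Sum>l\<in>nb s. k s {s,l})"
    by (rule sum.cong[OF refl]) (rule inc_reindex)
  finally show ?thesis .
qed

lemma inc_count:
  assumes f: "f \<in> edges V E" and a: "a \<in> V"
  shows "(\<Sum>l\<in>nb a. if {a,l} = f then 1 else 0) = (if a \<in> f then 1 else (0::real))"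
proof -
  have "(\<Sum>l\<in>nb a. if {a,l} = f then 1 else 0) = (\<Sum>e\<in>{e \<in> edges V E. a \<in> e}. if e = f then 1 else (0::real))"
    by (rule inc_reindex[OF a, symmetric])
  also have "\<dots> = (if a \<in> f then 1 else 0)"
    using f fin_Ed by (simp add: sum.delta')
  finally show ?thesis .
qed

lemma handshake: "(\<Sum>s\<in>V. real (card (nb s))) = 2 * real (card (edges V E))"
proof -
  have "(\<Sum>f\<in>edges V E. \<Sum>s\<in>f. (1::real)) = (\<Sum>s\<in>V. \<Sum>l\<in>nb s. 1)" by (rule edge_sum)
  moreover have "(\<Sum>f\<in>edges V E. \<Sum>s\<in>f. (1::real)) = (\<Sum>f\<in>edges V E. 2)"
    by (rule sum.cong) (auto simp: edge_card)
  ultimately show ?thesis by simp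
qed

abbreviation "VS \<equiv> subdiv_vertices V E"
abbreviation "ES \<equiv> subdiv_adj V E"

lemma ES_simps[simp]:
  "ES (Inl a) (Inr e) = (e \<in> edges V E \<and> a \<in> e)"
  "ES (Inr e) (Inl a) = (e \<in> edges V E \<and> a \<in> e)"
  "ES (Inl a) (Inl b) = False"
  "ES (Inr e) (Inr f) = False"
  by (simp_all add: subdiv_adj_def)

lemma VS_simps[simp]:
  "Inl a \<in> VS = (a \<in> V)" "Inr e \<in> VS = (e \<in> edges V E)"
  by (auto simp: subdiv_vertices_def)

lemma S_simple: "simple_graph VS ES"
  unfolding simple_graph_def
proof (intro conjI allI impI)
  show "finite VS" using finV fin_Ed by (simp add: subdiv_vertices_def)
next
  fix x y assume "ES x y"
  thus "x \<in> VS" "y \<in> VS" "ES y x"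
    by (cases x; cases y; auto dest: edge_subV)+
next
  fix x show "\<not> ES x x" by (cases x) auto
qed

lemma S_path: "E\<^sup>*\<^sup>* a b \<Longrightarrow> ES\<^sup>*\<^sup>* (Inl a) (Inl b)"
proof (induction rule: rtranclp_induct)
  case base then show ?case by simp
next
  case (step b c)
  have "ES (Inl b) (Inr {b,c})" using edge_mem[OF step.hyps(2)] by simp
  moreover have "ES (Inr {b,c}) (Inl c)" using edge_mem[OF step.hyps(2)] by simp
  ultimately show ?case using step.IH
    by (meson rtranclp.rtrancl_into_rtrancl)
qed

lemma S_conn: "connected_graph VS ES"
  unfolding connected_graph_def
proof (intro ballI)
  fix x y assume x: "x \<in> VS" and y: "y \<in> VS"
  have rep: "\<exists>a\<in>V. ES\<^sup>*\<^sup>* z (Inl a) \<and> ES\<^sup>*\<^sup>* (Inl a) z" if "z \<in> VS" for z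
  proof (cases z)
    case (Inl a) then show ?thesis using that by auto
  next
    case (Inr e)
    hence e: "e \<in> edges V E" using that by simp
    then obtain p q where pq: "e = {p,q}" "E p q" "p \<in> V" "q \<in> V" "p \<noteq> q" by (rule edge_cases)
    have "ES z (Inl p)" "ES (Inl p) z" using Inr e pq by auto
    thus ?thesis using pq(3) by blast
  qed
  obtain a where a: "a \<in> V" "ES\<^sup>*\<^sup>* x (Inl a)" using rep[OF x] by blast
  obtain b where b: "b \<in> V" "ES\<^sup>*\<^sup>* (Inl b) y" using rep[OF y] by blast
  have "ES\<^sup>*\<^sup>* (Inl a) (Inl b)" using S_path conn[OF a(1) b(1)] by blast
  thus "ES\<^sup>*\<^sup>* x y" using a b by (meson rtranclp_trans)
qed

lemma S_cgraph: "cgraph VS ES"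
  using S_simple S_conn by (unfold_locales)

lemma S_nb_Inl:
  assumes a: "a \<in> V" shows "{y \<in> VS. ES (Inl a) y} = Inr ` {e \<in> edges V E. a \<in> e}"
proof (intro Set.set_eqI iffI)
  fix y :: "'a + 'a set" assume "y \<in> {y \<in> VS. ES (Inl a) y}"
  thus "y \<in> Inr ` {e \<in> edges V E. a \<in> e}" by (cases y) auto
next
  fix y :: "'a + 'a set" assume "y \<in> Inr ` {e \<in> edges V E. a \<in> e}"
  thus "y \<in> {y \<in> VS. ES (Inl a) y}" by auto
qed

lemma S_nb_Inr:
  assumes f: "f \<in> edges V E" shows "{y \<in> VS. ES (Inr f) y} = Inl ` f"
proof (intro Set.set_eqI iffI)
  fix y :: "'a + 'a set" assume "y \<in> {y \<in> VS. ES (Inr f) y}"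
  thus "y \<in> Inl ` f" by (cases y) auto
next
  fix y :: "'a + 'a set" assume "y \<in> Inl ` f"
  thus "y \<in> {y \<in> VS. ES (Inr f) y}" using f edge_subV[OF f] by auto
qed

lemma S_deg_Inl: assumes "a \<in> V" shows "Defs.degree VS ES (Inl a) = Defs.degree V E a"
  unfolding Defs.degree_def S_nb_Inl[OF assms]
  by (simp add: card_image inc_card[OF assms] nb_def)

lemma S_deg_Inr: assumes "f \<in> edges V E" shows "Defs.degree VS ES (Inr f) = 2"
  unfolding Defs.degree_def S_nb_Inr[OF assms]
  by (simp add: card_image edge_card[OF assms])

lemma lift:
  assumes v: "\<And>a. a \<in> V \<Longrightarrow> Lap v a = \<alpha> a + (1/2) * (\<Sum>l\<in>nb a. c {a,l})"
    and x: "x \<in> VS"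
  shows "cgraph.Lap VS ES (\<lambda>x. case x of Inl a \<Rightarrow> 2 * v a | Inr f \<Rightarrow> (\<Sum>s\<in>f. v s) + c f / 2) x
         = (case x of Inl a \<Rightarrow> \<alpha> a | Inr f \<Rightarrow> c f)"
proof -
  interpret S: cgraph VS ES by (rule S_cgraph)
  define u where "u = (\<lambda>x. case x of Inl a \<Rightarrow> 2 * v a | Inr f \<Rightarrow> (\<Sum>s\<in>f. v s) + c f / 2)"
  show ?thesis
  proof (cases x)
    case (Inl a)
    hence a: "a \<in> V" using x by simp
    have "S.Lap u x = (\<Sum>y\<in>Inr ` {e \<in> edges V E. a \<in> e}. u (Inl a) - u y)"
      unfolding S.Lap_def S.nb_def Inl S_nb_Inl[OF a] ..
    also have "\<dots> = (\<Sum>e\<in>{e \<in> edges V E. a \<in> e}. u (Inl a) - u (Inr e))"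
      by (simp add: sum.reindex)
    also have "\<dots> = (\<Sum>l\<in>nb a. u (Inl a) - u (Inr {a,l}))"
      by (rule inc_reindex[OF a])
    also have "\<dots> = (\<Sum>l\<in>nb a. (v a - v l) - (1/2) * c {a,l})"
    proof (rule sum.cong[OF refl])
      fix l assume "l \<in> nb a"
      hence "l \<noteq> a" using E_irr by (auto simp: nb_def)
      thus "u (Inl a) - u (Inr {a,l}) = (v a - v l) - (1/2) * c {a,l}"
        by (simp add: u_def)
    qed
    also have "\<dots> = Lap v a - (1/2) * (\<Sum>l\<in>nb a. c {a,l})"
      by (simp add: Lap_def sum_subtractf sum_distrib_left)
    also have "\<dots> = \<alpha> a" using v[OF a] by simp
    finally show ?thesis using Inl by (simp add: u_def)
  next
    case (Inr f)
    hence f: "f \<in> edges V E" using x by simp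
    then obtain p q where pq: "f = {p,q}" "p \<noteq> q" by (rule edge_cases) auto
    have "S.Lap u x = (\<Sum>y\<in>Inl ` f. u (Inr f) - u y)"
      unfolding S.Lap_def S.nb_def Inr S_nb_Inr[OF f] ..
    also have "\<dots> = (\<Sum>s\<in>f. u (Inr f) - u (Inl s))"
      by (simp add: sum.reindex)
    also have "\<dots> = c f"
      using pq by (simp add: u_def)
    finally show ?thesis using Inr by (simp add: u_def)
  qed
qed

lemma Lap_lin4: "Lap (\<lambda>x. c1 * u1 x + c2 * u2 x + c3 * u3 x + c4 * u4 x) k
   = c1 * Lap u1 k + c2 * Lap u2 k + c3 * Lap u3 k + c4 * Lap u4 k"
  by (simp only: Lap_add Lap_scale)

lemma green_exists:
  assumes "r \<in> V"
  shows "\<exists>g. \<forall>a\<in>V. \<forall>k\<in>V. Lap (g a) k = (if k = a then 1 else 0) - (if k = r then 1 else 0)"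
proof -
  have "\<forall>a\<in>V. \<exists>w. \<forall>k\<in>V. Lap w k = (if k = a then 1 else 0) - (if k = r then 1 else 0)"
  proof
    fix a assume a: "a \<in> V"
    have "(\<Sum>k\<in>V. (if k = a then 1 else 0) - (if k = r then (1::real) else 0)) = 0"
      using a assms finV by (simp add: sum_subtractf)
    thus "\<exists>w. \<forall>k\<in>V. Lap w k = (if k = a then 1 else 0) - (if k = r then 1 else 0)"
      using exists_sol[OF assms] by blast
  qed
  thus ?thesis by (rule bchoice)
qed

end

locale green = cgraph +
  fixes r :: 'a and g :: "'a \<Rightarrow> 'a \<Rightarrow> real"
  assumes rV: "r \<in> V"
    and gL: "\<And>a k. a \<in> V \<Longrightarrow> k \<in> V \<Longrightarrow> Lap (g a) k = (if k = a then 1 else 0) - (if k = r then 1 else 0)"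
begin

lemma res_g:
  assumes a: "a \<in> V" and b: "b \<in> V"
  shows "resistance V E a b = g a a - g b a - g a b + g b b"
proof -
  have "resistance V E a b = (\<lambda>x. g a x - g b x) a - (\<lambda>x. g a x - g b x) b"
    by (rule res_eq[OF a b]) (simp add: Lap_diff gL a b)
  thus ?thesis by simp
qed

lemma foster:
  "(\<Sum>f\<in>edges V E. \<Sum>s\<in>f. \<Sum>t\<in>f. resistance V E s t) = 2 * (real (card V) - 1)"
proof -
  have "(\<Sum>f\<in>edges V E. \<Sum>s\<in>f. \<Sum>t\<in>f. resistance V E s t)
       = (\<Sum>s\<in>V. \<Sum>l\<in>nb s. \<Sum>t\<in>{s,l}. resistance V E s t)"
    by (rule edge_sum)
  also have "\<dots> = (\<Sum>s\<in>V. \<Sum>l\<in>nb s. (g s s - g s l) + (g l l - g l s))"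
  proof (intro sum.cong refl)
    fix s l assume s: "s \<in> V" and l: "l \<in> nb s"
    have lV: "l \<in> V" and ne: "s \<noteq> l" using l E_irr by (auto simp: nb_def)
    show "(\<Sum>t\<in>{s,l}. resistance V E s t) = (g s s - g s l) + (g l l - g l s)"
      using ne by (simp add: res_refl[OF s] res_g[OF s lV])
  qed
  also have "\<dots> = (\<Sum>s\<in>V. \<Sum>l\<in>nb s. g s s - g s l) + (\<Sum>s\<in>V. \<Sum>l\<in>nb s. g l l - g l s)"
    by (simp add: sum.distrib)
  also have "(\<Sum>s\<in>V. \<Sum>l\<in>nb s. g l l - g l s) = (\<Sum>s\<in>V. \<Sum>l\<in>nb s. g s s - g s l)"
    by (rule sum_swapE)
  also have "(\<Sum>s\<in>V. \<Sum>l\<in>nb s. g s s - g s l) = (\<Sum>s\<in>V. Lap (g s) s)"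
    by (simp add: Lap_def)
  also have "\<dots> = (\<Sum>s\<in>V. 1 - (if s = r then 1 else 0))"
    by (rule sum.cong) (auto simp: gL)
  also have "\<dots> = real (card V) - 1"
    using rV finV by (simp add: sum_subtractf)
  finally show ?thesis by simp
qed

lemma S_res:
  assumes i: "i \<in> VS" and j: "j \<in> VS"
    and v: "\<And>a. a \<in> V \<Longrightarrow> Lap v a = \<alpha> a + (1/2) * (\<Sum>l\<in>nb a. c {a,l})"
    and hk: "\<And>k. k \<in> VS \<Longrightarrow> (case k of Inl a \<Rightarrow> \<alpha> a | Inr f \<Rightarrow> c f)
                = (if k = i then 1 else 0) - (if k = j then 1 else 0)"
  shows "resistance VS ES i j
     = (case i of Inl a \<Rightarrow> 2 * v a | Inr f \<Rightarrow> (\<Sum>s\<in>f. v s) + c f / 2)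
     - (case j of Inl a \<Rightarrow> 2 * v a | Inr f \<Rightarrow> (\<Sum>s\<in>f. v s) + c f / 2)"
proof -
  interpret S: cgraph VS ES by (rule S_cgraph)
  show ?thesis
    by (rule S.res_eq[OF i j]) (simp add: lift[OF v] hk)
qed

lemma R1:
  assumes a: "a \<in> V" and b: "b \<in> V"
  shows "resistance VS ES (Inl a) (Inl b) = 2 * resistance V E a b"
proof -
  define v where "v = (\<lambda>x. g a x - g b x)"
  define c where "c = (\<lambda>h::'a set. 0::real)"
  define \<alpha> where "\<alpha> = (\<lambda>k. (if k = a then 1 else 0) - (if k = b then 1 else (0::real)))"
  have vL: "Lap v k = \<alpha> k + (1/2) * (\<Sum>l\<in>nb k. c {k,l})" if k: "k \<in> V" for k
    using a b k by (simp add: v_def c_def \<alpha>_def Lap_diff gL)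
  have "resistance VS ES (Inl a) (Inl b)
     = (case Inl a of Inl a \<Rightarrow> 2 * v a | Inr f \<Rightarrow> (\<Sum>s\<in>f. v s) + c f / 2)
     - (case Inl b of Inl a \<Rightarrow> 2 * v a | Inr f \<Rightarrow> (\<Sum>s\<in>f. v s) + c f / 2)"
  proof (rule S_res[where \<alpha>=\<alpha>, OF _ _ vL])
    fix k assume "k \<in> VS"
    show "(case k of Inl a \<Rightarrow> \<alpha> a | Inr f \<Rightarrow> c f) = (if k = Inl a then 1 else 0) - (if k = Inl b then 1 else 0)"
      by (cases k) (auto simp: \<alpha>_def c_def)
  qed (use a b in auto)
  thus ?thesis by (simp add: res_g[OF a b] v_def)
qed

lemma R2:
  assumes a: "a \<in> V" and f: "f \<in> edges V E"
  shows "resistance VS ES (Inl a) (Inr f)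
     = (\<Sum>s\<in>f. resistance V E a s) - (\<Sum>s\<in>f. \<Sum>t\<in>f. resistance V E s t) / 4 + 1/2"
proof -
  obtain p q where pq: "f = {p,q}" "p \<in> V" "q \<in> V" "p \<noteq> q" using f by (rule edge_cases) auto
  define v where "v = (\<lambda>x. 1 * g a x + (-1/2) * g p x + (-1/2) * g q x + 0 * g a x)"
  define c where "c = (\<lambda>e. - (if e = f then 1 else (0::real)))"
  define \<alpha> where "\<alpha> = (\<lambda>k. if k = a then 1 else (0::real))"
  have vL: "Lap v k = \<alpha> k + (1/2) * (\<Sum>l\<in>nb k. c {k,l})" if k: "k \<in> V" for k
  proof -
    have "(\<Sum>l\<in>nb k. c {k,l}) = - (\<Sum>l\<in>nb k. if {k,l} = f then 1 else 0)"
      by (simp add: c_def sum_negf)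
    also have "\<dots> = - (if k \<in> f then 1 else 0)" by (simp add: inc_count[OF f k])
    finally have cs: "(\<Sum>l\<in>nb k. c {k,l}) = - (if k \<in> f then 1 else 0)" .
    show ?thesis
      unfolding v_def Lap_lin4 cs using a pq k by (simp add: gL \<alpha>_def)
  qed
  have "resistance VS ES (Inl a) (Inr f)
     = (case Inl a of Inl a \<Rightarrow> 2 * v a | Inr f \<Rightarrow> (\<Sum>s\<in>f. v s) + c f / 2)
     - (case Inr f of Inl a \<Rightarrow> 2 * v a | Inr f \<Rightarrow> (\<Sum>s\<in>f. v s) + c f / 2)"
  proof (rule S_res[where \<alpha>=\<alpha>, OF _ _ vL])
    fix k assume "k \<in> VS"
    show "(case k of Inl a \<Rightarrow> \<alpha> a | Inr f \<Rightarrow> c f) = (if k = Inl a then 1 else 0) - (if k = Inr f then 1 else 0)"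
      by (cases k) (auto simp: \<alpha>_def c_def)
  qed (use a f in auto)
  also have "\<dots> = 2 * v a - (v p + v q) + 1/2"
    using pq by (simp add: c_def)
  finally show ?thesis
    using pq a by (simp add: res_g res_refl v_def field_simps)
qed

lemma R3:
  assumes e: "e \<in> edges V E" and f: "f \<in> edges V E" and ef: "e \<noteq> f"
  shows "resistance VS ES (Inr e) (Inr f)
     = 1 + (\<Sum>s\<in>e. \<Sum>t\<in>f. resistance V E s t) / 2
         - (\<Sum>s\<in>e. \<Sum>t\<in>e. resistance V E s t) / 4 - (\<Sum>s\<in>f. \<Sum>t\<in>f. resistance V E s t) / 4"
proof -
  obtain p q where pq: "e = {p,q}" "p \<in> V" "q \<in> V" "p \<noteq> q" using e by (rule edge_cases) auto
  obtain p' q' where pq': "f = {p',q'}" "p' \<in> V" "q' \<in> V" "p' \<noteq> q'" using f by (rule edge_cases) auto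
  define v where "v = (\<lambda>x. (1/2) * g p x + (1/2) * g q x + (-1/2) * g p' x + (-1/2) * g q' x)"
  define c where "c = (\<lambda>h. (if h = e then 1 else 0) - (if h = f then 1 else (0::real)))"
  define \<alpha> where "\<alpha> = (\<lambda>k::'a. 0::real)"
  have vL: "Lap v k = \<alpha> k + (1/2) * (\<Sum>l\<in>nb k. c {k,l})" if k: "k \<in> V" for k
  proof -
    have "(\<Sum>l\<in>nb k. c {k,l}) = (\<Sum>l\<in>nb k. if {k,l} = e then 1 else 0) - (\<Sum>l\<in>nb k. if {k,l} = f then 1 else 0)"
      by (simp add: c_def sum_subtractf)
    also have "\<dots> = (if k \<in> e then 1 else 0) - (if k \<in> f then 1 else 0)"
      by (simp add: inc_count[OF f k] inc_count[OF e k])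
    finally have cs: "(\<Sum>l\<in>nb k. c {k,l}) = (if k \<in> e then 1 else 0) - (if k \<in> f then 1 else 0)" .
    show ?thesis
      unfolding v_def Lap_lin4 cs using pq pq' k by (simp add: gL \<alpha>_def)
  qed
  have "resistance VS ES (Inr e) (Inr f)
     = (case Inr e of Inl a \<Rightarrow> 2 * v a | Inr f \<Rightarrow> (\<Sum>s\<in>f. v s) + c f / 2)
     - (case Inr f of Inl a \<Rightarrow> 2 * v a | Inr f \<Rightarrow> (\<Sum>s\<in>f. v s) + c f / 2)"
  proof (rule S_res[where \<alpha>=\<alpha>, OF _ _ vL])
    fix k assume "k \<in> VS"
    show "(case k of Inl a \<Rightarrow> \<alpha> a | Inr f \<Rightarrow> c f) = (if k = Inr e then 1 else 0) - (if k = Inr f then 1 else 0)"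
      by (cases k) (use ef in \<open>auto simp: \<alpha>_def c_def\<close>)
  qed (use e f in auto)
  also have "\<dots> = (v p + v q) - (v p' + v q') + 1"
    using pq pq' ef by (simp add: c_def)
  finally show ?thesis
    using pq pq' by (simp add: res_g res_refl v_def field_simps)
qed

end

context cgraph
begin

lemma K1: "add_deg_kirchhoff V E = (\<Sum>i\<in>V. \<Sum>j\<in>V. Defs.degree V E i * resistance V E i j)"
proof -
  let ?d = "Defs.degree V E" and ?R = "resistance V E"
  have rm: "(\<Sum>j\<in>V - {i}. F j) = (\<Sum>j\<in>V. F j)" if "i \<in> V" "F i = 0" for i and F :: "'a \<Rightarrow> real"
    using sum.remove[OF finV that(1), of F] that(2) by simp
  have "(\<Sum>i\<in>V. \<Sum>j\<in>V - {i}. (?d i + ?d j) * ?R i j) = (\<Sum>i\<in>V. \<Sum>j\<in>V. (?d i + ?d j) * ?R i j)"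
    by (rule sum.cong[OF refl], rule rm) (auto simp: res_refl)
  also have "\<dots> = (\<Sum>i\<in>V. \<Sum>j\<in>V. ?d i * ?R i j) + (\<Sum>i\<in>V. \<Sum>j\<in>V. ?d j * ?R i j)"
    by (simp add: distrib_right sum.distrib)
  also have "(\<Sum>i\<in>V. \<Sum>j\<in>V. ?d j * ?R i j) = (\<Sum>j\<in>V. \<Sum>i\<in>V. ?d j * ?R i j)"
    by (rule sum.swap)
  also have "\<dots> = (\<Sum>j\<in>V. \<Sum>i\<in>V. ?d j * ?R j i)"
    by (intro sum.cong refl) (simp add: res_sym)
  finally show ?thesis unfolding add_deg_kirchhoff_def by simp
qed

lemma K2: "mul_deg_kirchhoff V E = (\<Sum>i\<in>V. \<Sum>j\<in>V. Defs.degree V E i * Defs.degree V E j * resistance V E i j) / 2"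
proof -
  let ?d = "Defs.degree V E" and ?R = "resistance V E"
  have rm: "(\<Sum>j\<in>V - {i}. F j) = (\<Sum>j\<in>V. F j)" if "i \<in> V" "F i = 0" for i and F :: "'a \<Rightarrow> real"
    using sum.remove[OF finV that(1), of F] that(2) by simp
  have "(\<Sum>i\<in>V. \<Sum>j\<in>V - {i}. ?d i * ?d j * ?R i j) = (\<Sum>i\<in>V. \<Sum>j\<in>V. ?d i * ?d j * ?R i j)"
    by (rule sum.cong[OF refl], rule rm) (auto simp: res_refl)
  thus ?thesis unfolding mul_deg_kirchhoff_def by simp
qed

lemma deg_nb: "Defs.degree V E k = real (card (nb k))"
  by (simp add: Defs.degree_def nb_def)

lemma E1: "(\<Sum>f\<in>edges V E. \<Sum>s\<in>f. h s) = (\<Sum>s\<in>V. Defs.degree V E s * h s)"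
  by (simp add: edge_sum deg_nb)

lemma sumVS: "(\<Sum>x\<in>VS. h x) = (\<Sum>a\<in>V. h (Inl a)) + (\<Sum>e\<in>edges V E. h (Inr e))"
proof -
  have "VS = Inl ` V \<union> Inr ` edges V E" by (simp add: subdiv_vertices_def)
  moreover have "Inl ` V \<inter> Inr ` edges V E = {}" by auto
  ultimately have "(\<Sum>x\<in>VS. h x) = (\<Sum>x\<in>Inl ` V. h x) + (\<Sum>x\<in>Inr ` edges V E. h x)"
    using finV fin_Ed by (simp add: sum.union_disjoint)
  thus ?thesis by (simp add: sum.reindex)
qed

end

context green
begin

lemma main:
  defines "n \<equiv> real (card V)" and "m \<equiv> real (card (edges V E))"
  shows "add_deg_kirchhoff VS ES
    = 4 * add_deg_kirchhoff V E + 4 * mul_deg_kirchhoff V E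
      + (m + n) * (m - n + 1) + 2 * m * (m - n)"
proof -
  interpret S: cgraph VS ES by (rule S_cgraph)
  let ?d = "Defs.degree V E" and ?R = "resistance V E"
  let ?dS = "Defs.degree VS ES" and ?RS = "resistance VS ES"
  define Ed where "Ed = edges V E"
  define D where "D a = (\<Sum>s\<in>V. ?d s * ?R a s)" for a
  define Q where "Q f = (\<Sum>s\<in>f. \<Sum>t\<in>f. ?R s t)" for f
  define P where "P e f = (\<Sum>s\<in>e. \<Sum>t\<in>f. ?R s t)" for e f
  define Rp where "Rp = add_deg_kirchhoff V E"
  define Rm where "Rm = mul_deg_kirchhoff V E"
  have Rp1: "Rp = (\<Sum>a\<in>V. \<Sum>b\<in>V. ?d a * ?R a b)" by (simp add: Rp_def K1)
  have Rp2: "Rp = (\<Sum>a\<in>V. D a)"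
  proof -
    have "(\<Sum>a\<in>V. D a) = (\<Sum>a\<in>V. \<Sum>s\<in>V. ?d s * ?R s a)"
      unfolding D_def by (intro sum.cong refl) (simp add: res_sym)
    also have "\<dots> = (\<Sum>s\<in>V. \<Sum>a\<in>V. ?d s * ?R s a)" by (rule sum.swap)
    finally show ?thesis using Rp1 by simp
  qed
  have Rm1: "2 * Rm = (\<Sum>a\<in>V. ?d a * D a)"
  proof -
    have "2 * Rm = (\<Sum>a\<in>V. \<Sum>b\<in>V. ?d a * ?d b * ?R a b)" by (simp add: Rm_def K2)
    also have "\<dots> = (\<Sum>a\<in>V. ?d a * D a)" by (simp add: D_def sum_distrib_left mult.assoc)
    finally show ?thesis .
  qed
  have hs: "(\<Sum>a\<in>V. ?d a) = 2 * m" by (simp add: deg_nb handshake m_def)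
  have fo: "(\<Sum>f\<in>Ed. Q f) = 2 * (n - 1)" by (simp add: Q_def Ed_def foster n_def)
  have cardEd: "card Ed = m" by (simp add: m_def Ed_def)
  have cardV: "card V = n" by (simp add: n_def)
  have ON: "(\<Sum>f\<in>Ed. ?RS (Inl a) (Inr f)) = D a - (n - 1) / 2 + m / 2" if a: "a \<in> V" for a
  proof -
    have "(\<Sum>f\<in>Ed. ?RS (Inl a) (Inr f)) = (\<Sum>f\<in>Ed. (\<Sum>s\<in>f. ?R a s) - Q f / 4 + 1/2)"
      by (intro sum.cong refl) (simp add: R2[OF a] Q_def Ed_def)
    also have "\<dots> = (\<Sum>f\<in>Ed. \<Sum>s\<in>f. ?R a s) - (\<Sum>f\<in>Ed. Q f) / 4 + m / 2"
      by (simp add: sum.distrib sum_subtractf sum_divide_distrib cardEd)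
    also have "(\<Sum>f\<in>Ed. \<Sum>s\<in>f. ?R a s) = D a" unfolding Ed_def D_def by (rule E1)
    finally show ?thesis using fo by simp
  qed
  have PP: "(\<Sum>e\<in>Ed. \<Sum>f\<in>Ed. P e f) = 2 * Rm"
  proof -
    have "(\<Sum>e\<in>Ed. \<Sum>f\<in>Ed. P e f) = (\<Sum>e\<in>Ed. \<Sum>s\<in>e. \<Sum>f\<in>Ed. \<Sum>t\<in>f. ?R s t)"
      unfolding P_def by (intro sum.cong refl) (simp add: sum.swap[of _ Ed])
    also have "\<dots> = (\<Sum>e\<in>Ed. \<Sum>s\<in>e. D s)"
      unfolding D_def Ed_def by (intro sum.cong refl) (rule E1)
    also have "\<dots> = (\<Sum>a\<in>V. ?d a * D a)" unfolding Ed_def by (rule E1)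
    finally show ?thesis using Rm1 by simp
  qed
  have NN: "(\<Sum>e\<in>Ed. \<Sum>f\<in>Ed. ?RS (Inr e) (Inr f)) = m * m + Rm - m * (n - 1) - m"
  proof -
    have T: "?RS (Inr e) (Inr f) = (1 + P e f / 2 - Q e / 4 - Q f / 4) - (if e = f then 1 else 0)"
      if e: "e \<in> Ed" and f: "f \<in> Ed" for e f
    proof (cases "e = f")
      case True
      have "Inr e \<in> VS" using e by (simp add: Ed_def)
      then show ?thesis using True by (simp add: S.res_refl P_def Q_def)
    next
      case False
      then show ?thesis using R3[of e f] e f by (simp add: P_def Q_def Ed_def)
    qed
    have "(\<Sum>e\<in>Ed. \<Sum>f\<in>Ed. ?RS (Inr e) (Inr f))
       = (\<Sum>e\<in>Ed. \<Sum>f\<in>Ed. (1 + P e f / 2 - Q e / 4 - Q f / 4) - (if e = f then 1 else 0))"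
      by (intro sum.cong refl) (simp add: T)
    also have "\<dots> = (\<Sum>e\<in>Ed. m + (\<Sum>f\<in>Ed. P e f) / 2 - m * Q e / 4 - (\<Sum>f\<in>Ed. Q f) / 4 - 1)"
    proof (intro sum.cong refl)
      fix e assume e: "e \<in> Ed"
      have fE: "finite Ed" by (simp add: Ed_def fin_Ed)
      show "(\<Sum>f\<in>Ed. (1 + P e f / 2 - Q e / 4 - Q f / 4) - (if e = f then 1 else 0))
          = m + (\<Sum>f\<in>Ed. P e f) / 2 - m * Q e / 4 - (\<Sum>f\<in>Ed. Q f) / 4 - 1"
        using e fE by (simp add: sum.distrib sum_subtractf sum_divide_distrib cardEd)
    qed
    also have "\<dots> = m * m + (\<Sum>e\<in>Ed. \<Sum>f\<in>Ed. P e f) / 2 - m * (\<Sum>e\<in>Ed. Q e) / 4 - m * (\<Sum>f\<in>Ed. Q f) / 4 - m"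
      by (simp add: sum.distrib sum_subtractf sum_divide_distrib sum_distrib_left cardEd)
    finally show ?thesis using PP fo by (simp add: algebra_simps)
  qed
  have "add_deg_kirchhoff VS ES = (\<Sum>x\<in>VS. \<Sum>y\<in>VS. ?dS x * ?RS x y)" by (rule S.K1)
  also have "\<dots> = (\<Sum>a\<in>V. (\<Sum>b\<in>V. ?dS (Inl a) * ?RS (Inl a) (Inl b)) + (\<Sum>f\<in>Ed. ?dS (Inl a) * ?RS (Inl a) (Inr f)))
              + (\<Sum>e\<in>Ed. (\<Sum>b\<in>V. ?dS (Inr e) * ?RS (Inr e) (Inl b)) + (\<Sum>f\<in>Ed. ?dS (Inr e) * ?RS (Inr e) (Inr f)))"
    by (simp add: sumVS Ed_def)
  also have "\<dots> = (\<Sum>a\<in>V. (\<Sum>b\<in>V. ?d a * (2 * ?R a b)) + ?d a * (D a - (n - 1) / 2 + m / 2))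
              + (\<Sum>e\<in>Ed. (\<Sum>b\<in>V. 2 * ?RS (Inl b) (Inr e)) + 2 * (\<Sum>f\<in>Ed. ?RS (Inr e) (Inr f)))"
  proof -
    have A: "(\<Sum>b\<in>V. ?dS (Inl a) * ?RS (Inl a) (Inl b)) + (\<Sum>f\<in>Ed. ?dS (Inl a) * ?RS (Inl a) (Inr f))
        = (\<Sum>b\<in>V. ?d a * (2 * ?R a b)) + ?d a * (D a - (n - 1) / 2 + m / 2)" if a: "a \<in> V" for a
      using a by (simp add: S_deg_Inl R1 ON[OF a, symmetric] sum_distrib_left)
    have B: "(\<Sum>b\<in>V. ?dS (Inr e) * ?RS (Inr e) (Inl b)) + (\<Sum>f\<in>Ed. ?dS (Inr e) * ?RS (Inr e) (Inr f))
        = (\<Sum>b\<in>V. 2 * ?RS (Inl b) (Inr e)) + 2 * (\<Sum>f\<in>Ed. ?RS (Inr e) (Inr f))" if e: "e \<in> Ed" for e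
    proof -
      have "Inr e \<in> VS" using e by (simp add: Ed_def)
      hence "?RS (Inr e) (Inl b) = ?RS (Inl b) (Inr e)" if "b \<in> V" for b
        using that by (simp add: S.res_sym)
      thus ?thesis using e by (simp add: S_deg_Inr Ed_def sum_distrib_left)
    qed
    show ?thesis using A B by simp
  qed
  also have "(\<Sum>e\<in>Ed. (\<Sum>b\<in>V. 2 * ?RS (Inl b) (Inr e)) + 2 * (\<Sum>f\<in>Ed. ?RS (Inr e) (Inr f)))
      = 2 * (\<Sum>b\<in>V. D b - (n - 1) / 2 + m / 2) + 2 * (m * m + Rm - m * (n - 1) - m)"
  proof -
    have "(\<Sum>e\<in>Ed. \<Sum>b\<in>V. 2 * ?RS (Inl b) (Inr e)) = 2 * (\<Sum>b\<in>V. \<Sum>e\<in>Ed. ?RS (Inl b) (Inr e))"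
      by (simp add: sum.swap[of _ Ed] sum_distrib_left)
    also have "\<dots> = 2 * (\<Sum>b\<in>V. D b - (n - 1) / 2 + m / 2)"
      by (simp add: ON)
    finally show ?thesis using NN by (simp add: sum.distrib sum_distrib_left[symmetric])
  qed
  also have "(\<Sum>a\<in>V. (\<Sum>b\<in>V. ?d a * (2 * ?R a b)) + ?d a * (D a - (n - 1) / 2 + m / 2))
      = 2 * Rp + 2 * Rm + 2 * m * ((m - n + 1) / 2)"
  proof -
    have "(\<Sum>a\<in>V. (\<Sum>b\<in>V. ?d a * (2 * ?R a b)) + ?d a * (D a - (n - 1) / 2 + m / 2))
        = 2 * (\<Sum>a\<in>V. \<Sum>b\<in>V. ?d a * ?R a b) + (\<Sum>a\<in>V. ?d a * D a) + (\<Sum>a\<in>V. ?d a) * ((m - n + 1) / 2)"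
    proof -
      have pw: "(\<Sum>b\<in>V. ?d a * (2 * ?R a b)) + ?d a * (D a - (n - 1) / 2 + m / 2)
          = 2 * (\<Sum>b\<in>V. ?d a * ?R a b) + ?d a * D a + ?d a * ((m - n + 1) / 2)" for a
        by (simp add: sum_distrib_left algebra_simps) (simp add: field_simps)
      have "(\<Sum>a\<in>V. (\<Sum>b\<in>V. ?d a * (2 * ?R a b)) + ?d a * (D a - (n - 1) / 2 + m / 2))
         = (\<Sum>a\<in>V. 2 * (\<Sum>b\<in>V. ?d a * ?R a b) + ?d a * D a + ?d a * ((m - n + 1) / 2))"
        by (simp only: pw)
      also have "\<dots> = (\<Sum>a\<in>V. 2 * (\<Sum>b\<in>V. ?d a * ?R a b)) + (\<Sum>a\<in>V. ?d a * D a) + (\<Sum>a\<in>V. ?d a * ((m - n + 1) / 2))"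
        by (simp only: sum.distrib)
      also have "\<dots> = 2 * (\<Sum>a\<in>V. \<Sum>b\<in>V. ?d a * ?R a b) + (\<Sum>a\<in>V. ?d a * D a) + (\<Sum>a\<in>V. ?d a) * ((m - n + 1) / 2)"
        by (simp only: sum_distrib_left[symmetric] sum_distrib_right[symmetric])
      finally show ?thesis .
    qed
    thus ?thesis using Rp1 Rm1 hs by simp
  qed
  also have "2 * (\<Sum>b\<in>V. D b - (n - 1) / 2 + m / 2) = 2 * Rp + n * (m - n + 1)"
    using Rp2 cardV by (simp add: sum.distrib sum_subtractf algebra_simps) (simp add: field_simps)
  finally show ?thesis unfolding Rp_def[symmetric] Rm_def[symmetric] by (simp add: algebra_simps) (simp add: field_simps; linarith)
qed

end


theorem theorem2p4:
  fixes V :: "'a set" and E :: "'a \<Rightarrow> 'a \<Rightarrow> bool"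
  assumes "simple_graph V E" and "connected_graph V E" and "card V \<ge> 2"
  defines "n \<equiv> real (card V)" and "m \<equiv> real (card (edges V E))"
  shows "add_deg_kirchhoff (subdiv_vertices V E) (subdiv_adj V E)
    = 4 * add_deg_kirchhoff V E + 4 * mul_deg_kirchhoff V E
      + (m + n) * (m - n + 1) + 2 * m * (m - n)"
proof -
  interpret cgraph V E using assms(1,2) by unfold_locales
  have "V \<noteq> {}" using assms(3) by auto
  then obtain r where r: "r \<in> V" by blast
  obtain g where g: "\<forall>a\<in>V. \<forall>k\<in>V. Lap (g a) k = (if k = a then 1 else 0) - (if k = r then 1 else 0)"
    using green_exists[OF r] by blast
  interpret green V E r g
    by (unfold_locales) (use r g in auto)
  show ?thesis unfolding n_def m_def by (rule main)
qed

end
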